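(* For $1\le k\le n$ let $U^k=U^{\Phi_k\times\Psi}$ and $\widetilde U^k=U^{\widetilde\Phi_k\times\Psi}$ (so $\widetilde U^k\subset U^k$), and let $F^k$ be the orthogonal complement of $\widetilde U^k$ in $U^k$ (with respect to the standard inner product on $\mathbb{R}^{S_n}$). Then the subspaces $F^k$, $2\le k\le n$, are pairwise orthogonal, and each is orthogonal to the all-ones vector $\mathbf{1}$.
   Context: $S_n$ is the group of permutations of $\{1,\ldots,n\}$. For partitions $\mathcal{R}=(R_i)$, $\mathcal{C}=(C_j)$ of $\{1,\ldots,n\}$, the product partition $\mathcal{B}=\mathcal{R}\times\mathcal{C}=(R_i\times C_j)$ has marginal $|\pi_{\mathcal{B}}|=(t_{ij})$, $t_{ij}=|\{s:(s,\pi(s))\in R_i\times C_j\}|$; $U^{\mathcal{B}}=\{v\in\mathbb{R}^{S_n}: |\pi_{\mathcal{B}}|=|\sigma_{\mathcal{B}}|\Rightarrow v(\pi)=v(\sigma)\}$. Bold sections: $\Phi_k=(\{1,\ldots,k-1\},\{k\},\{k+1,\ldots,n\})$, $1\le k\le n$ (empty blocks omitted). Thin sections: $\widetilde\Phi_k=(\{1,\ldots,k\},\{k+1,\ldots,n\})$ for $1\le k\le n-1$, and $\widetilde\Phi_n=(\{1,\ldots,n\})$. Full partition: $\Psi=(\{1\},\ldots,\{n\})$. *)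

theory Defs
  imports Complex_Main "HOL-Combinatorics.Permutations"
begin

definition Sn :: "nat \<Rightarrow> (nat \<Rightarrow> nat) set" where
  "Sn n = {p. p permutes {1..n}}"

text \<open>R^{S_n}: real functions on permutations, vanishing outside S_n.\<close>
definition vecs :: "nat \<Rightarrow> ((nat \<Rightarrow> nat) \<Rightarrow> real) set" where
  "vecs n = {v. \<forall>p. p \<notin> Sn n \<longrightarrow> v p = 0}"

definition ip :: "nat \<Rightarrow> ((nat \<Rightarrow> nat) \<Rightarrow> real) \<Rightarrow> ((nat \<Rightarrow> nat) \<Rightarrow> real) \<Rightarrow> real" where
  "ip n v w = (\<Sum>p\<in>Sn n. v p * w p)"

definition ones :: "nat \<Rightarrow> (nat \<Rightarrow> nat) \<Rightarrow> real" where
  "ones n = (\<lambda>p. if p \<in> Sn n then 1 else 0)"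

text \<open>Partitions are ordered lists of blocks. Marginal |pi_B| of the product
  partition R x C: matrix t_ij = #{s in {1..n}. s in R_i and pi s in C_j}.\<close>
definition marginal :: "nat \<Rightarrow> nat set list \<Rightarrow> nat set list \<Rightarrow> (nat \<Rightarrow> nat) \<Rightarrow> nat list list" where
  "marginal n R C p = map (\<lambda>Ri. map (\<lambda>Cj. card {s\<in>{1..n}. s \<in> Ri \<and> p s \<in> Cj}) C) R"

definition U :: "nat \<Rightarrow> nat set list \<Rightarrow> nat set list \<Rightarrow> ((nat \<Rightarrow> nat) \<Rightarrow> real) set" where
  "U n R C = {v \<in> vecs n. \<forall>p\<in>Sn n. \<forall>q\<in>Sn n.
      marginal n R C p = marginal n R C q \<longrightarrow> v p = v q}"

definition Phi :: "nat \<Rightarrow> nat \<Rightarrow> nat set list" where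
  "Phi n k = filter (\<lambda>B. B \<noteq> {}) [{1..<k}, {k}, {k+1..n}]"

definition Phit :: "nat \<Rightarrow> nat \<Rightarrow> nat set list" where
  "Phit n k = filter (\<lambda>B. B \<noteq> {}) [{1..k}, {k+1..n}]"

definition Psi :: "nat \<Rightarrow> nat set list" where
  "Psi n = map (\<lambda>i. {i}) [1..<n+1]"

definition Uk :: "nat \<Rightarrow> nat \<Rightarrow> ((nat \<Rightarrow> nat) \<Rightarrow> real) set" where
  "Uk n k = U n (Phi n k) (Psi n)"

definition Utk :: "nat \<Rightarrow> nat \<Rightarrow> ((nat \<Rightarrow> nat) \<Rightarrow> real) set" where
  "Utk n k = U n (Phit n k) (Psi n)"

definition Fk :: "nat \<Rightarrow> nat \<Rightarrow> ((nat \<Rightarrow> nat) \<Rightarrow> real) set" where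
  "Fk n k = {v \<in> Uk n k. \<forall>w\<in>Utk n k. ip n v w = 0}"

end

theory Submission
  imports Defs
begin

lemma card_fiber:
  assumes p: "p permutes {1..n}" and B: "B \<subseteq> {1..n}"
  shows "card {s\<in>{1..n}. s \<in> B \<and> p s \<in> {j}} = (if j \<in> p ` B then 1 else 0)"
proof (cases "j \<in> p ` B")
  case True
  then obtain b where b: "b \<in> B" "j = p b" by auto
  have "{s\<in>{1..n}. s \<in> B \<and> p s \<in> {j}} = {b}"
    using b B permutes_inj[OF p] by (auto dest: injD)
  then show ?thesis using True by simp
next
  case False
  then have e: "{s\<in>{1..n}. s \<in> B \<and> p s \<in> {j}} = {}" using B by auto
  show ?thesis unfolding e using False by simp
qed

lemma marg_eq:
  assumes p: "p \<in> Sn n" and q: "q \<in> Sn n" and R: "\<forall>B\<in>set R. B \<subseteq> {1..n}"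
  shows "marginal n R (Psi n) p = marginal n R (Psi n) q \<longleftrightarrow> (\<forall>B\<in>set R. p ` B = q ` B)"
proof -
  have pp: "p permutes {1..n}" and qp: "q permutes {1..n}" using p q by (auto simp: Sn_def)
  have "marginal n R (Psi n) p = marginal n R (Psi n) q \<longleftrightarrow>
     (\<forall>B\<in>set R. \<forall>j\<in>{1..n}. card {s\<in>{1..n}. s \<in> B \<and> p s \<in> {j}} = card {s\<in>{1..n}. s \<in> B \<and> q s \<in> {j}})"
  proof -
    have S: "set (map (\<lambda>i. {i}) [1..<n+1]) = (\<lambda>i. {i}) ` {1..n}"
    proof -
      have "{1..<n+1} = {1..n}" by auto
      then show ?thesis by (simp only: set_map set_upt)
    qed
    have BI: "\<And>P. (\<forall>C\<in>(\<lambda>i. {i}) ` {1..n}. P C) \<longleftrightarrow> (\<forall>j\<in>{1..n}. P {j})" by simp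
    show ?thesis unfolding marginal_def Psi_def map_eq_conv S BI ..
  qed
  also have "\<dots> \<longleftrightarrow> (\<forall>B\<in>set R. \<forall>j\<in>{1..n}. (j \<in> p ` B \<longleftrightarrow> j \<in> q ` B))"
  proof (intro ball_cong refl)
    fix B j assume "B \<in> set R" "j \<in> {1..n}"
    then have B: "B \<subseteq> {1..n}" using R by blast
    show "card {s\<in>{1..n}. s \<in> B \<and> p s \<in> {j}} = card {s\<in>{1..n}. s \<in> B \<and> q s \<in> {j}}
       \<longleftrightarrow> (j \<in> p ` B \<longleftrightarrow> j \<in> q ` B)"
      unfolding card_fiber[OF pp B] card_fiber[OF qp B] by simp
  qed
  also have "\<dots> \<longleftrightarrow> (\<forall>B\<in>set R. p ` B = q ` B)"
  proof (intro ball_cong refl)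
    fix B assume "B \<in> set R"
    then have B: "B \<subseteq> {1..n}" using R by blast
    have s1: "p ` B \<subseteq> {1..n}" using permutes_image[OF pp] B by (metis image_mono)
    have s2: "q ` B \<subseteq> {1..n}" using permutes_image[OF qp] B by (metis image_mono)
    show "(\<forall>j\<in>{1..n}. (j \<in> p ` B \<longleftrightarrow> j \<in> q ` B)) \<longleftrightarrow> p ` B = q ` B"
    proof
      assume h: "\<forall>j\<in>{1..n}. (j \<in> p ` B \<longleftrightarrow> j \<in> q ` B)"
      show "p ` B = q ` B"
      proof (rule set_eqI)
        fix x show "x \<in> p ` B \<longleftrightarrow> x \<in> q ` B" using h s1 s2 by (meson subsetD)
      qed
    qed simp
  qed
  finally show ?thesis .
qed

lemma filt_all: "(\<forall>B\<in>set (filter (\<lambda>B. B \<noteq> {}) xs). f ` B = g ` B) \<longleftrightarrow> (\<forall>B\<in>set xs. f ` B = g ` B)"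
  by auto

lemma Uk_iff:
  assumes "1 \<le> k" "k \<le> n"
  shows "v \<in> Uk n k \<longleftrightarrow> v \<in> vecs n \<and> (\<forall>p\<in>Sn n. \<forall>q\<in>Sn n.
     p ` {1..<k} = q ` {1..<k} \<and> p k = q k \<and> p ` {k+1..n} = q ` {k+1..n} \<longrightarrow> v p = v q)"
proof -
  have R: "\<forall>B\<in>set (Phi n k). B \<subseteq> {1..n}" using assms by (auto simp: Phi_def)
  have M: "\<forall>p\<in>Sn n. \<forall>q\<in>Sn n. marginal n (Phi n k) (Psi n) p = marginal n (Phi n k) (Psi n) q
     \<longleftrightarrow> (p ` {1..<k} = q ` {1..<k} \<and> p k = q k \<and> p ` {k+1..n} = q ` {k+1..n})"
  proof (intro ballI)
    fix p q assume pq: "p \<in> Sn n" "q \<in> Sn n"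
    show "marginal n (Phi n k) (Psi n) p = marginal n (Phi n k) (Psi n) q
     \<longleftrightarrow> (p ` {1..<k} = q ` {1..<k} \<and> p k = q k \<and> p ` {k+1..n} = q ` {k+1..n})"
      unfolding marg_eq[OF pq R] unfolding Phi_def filt_all by simp
  qed
  show ?thesis unfolding Uk_def U_def using M by auto
qed

lemma Utk_iff:
  assumes "1 \<le> k" "k \<le> n"
  shows "v \<in> Utk n k \<longleftrightarrow> v \<in> vecs n \<and> (\<forall>p\<in>Sn n. \<forall>q\<in>Sn n.
     p ` {1..k} = q ` {1..k} \<and> p ` {k+1..n} = q ` {k+1..n} \<longrightarrow> v p = v q)"
proof -
  have R: "\<forall>B\<in>set (Phit n k). B \<subseteq> {1..n}" using assms by (auto simp: Phit_def)
  have M: "\<forall>p\<in>Sn n. \<forall>q\<in>Sn n. marginal n (Phit n k) (Psi n) p = marginal n (Phit n k) (Psi n) q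
     \<longleftrightarrow> (p ` {1..k} = q ` {1..k} \<and> p ` {k+1..n} = q ` {k+1..n})"
  proof (intro ballI)
    fix p q assume pq: "p \<in> Sn n" "q \<in> Sn n"
    show "marginal n (Phit n k) (Psi n) p = marginal n (Phit n k) (Psi n) q
     \<longleftrightarrow> (p ` {1..k} = q ` {1..k} \<and> p ` {k+1..n} = q ` {k+1..n})"
      unfolding marg_eq[OF pq R] unfolding Phit_def filt_all by simp
  qed
  show ?thesis unfolding Utk_def U_def using M by auto
qed


lemma img_fix:
  assumes "s permutes S" "S \<subseteq> B \<or> B \<inter> S = {}"
  shows "(r \<circ> s) ` B = r ` B"
proof -
  have "s ` B = B"
  proof (cases "S \<subseteq> B")
    case True then show ?thesis using permutes_image[OF permutes_subset[OF assms(1) True]] by simp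
  next
    case False then have d: "B \<inter> S = {}" using assms(2) by simp
    have "\<forall>x\<in>B. s x = x"
    proof
      fix x assume "x \<in> B" then have "x \<notin> S" using d by auto
      then show "s x = x" using permutes_not_in[OF assms(1)] by simp
    qed
    then show ?thesis by simp
  qed
  then show ?thesis by (metis image_comp)
qed

lemma perm_commute:
  assumes t: "t permutes A" and s: "s permutes B" and d: "A \<inter> B = {}"
  shows "t \<circ> s = s \<circ> t"
proof
  fix x
  show "(t \<circ> s) x = (s \<circ> t) x"
  proof (cases "x \<in> A")
    case True
    then have "x \<notin> B" "t x \<in> A" using d permutes_in_image[OF t] by auto
    then have "s x = x" "s (t x) = t x" using d permutes_not_in[OF s] by auto
    then show ?thesis by simp
  next
    case False
    then have tx: "t x = x" using permutes_not_in[OF t] by auto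
    show ?thesis
    proof (cases "x \<in> B")
      case True
      then have "s x \<in> B" using permutes_in_image[OF s] by auto
      then have "t (s x) = s x" using d permutes_not_in[OF t] by auto
      then show ?thesis using tx by simp
    next
      case False
      then show ?thesis using tx permutes_not_in[OF s] by simp
    qed
  qed
qed

lemma Sn_comp: "p \<in> Sn n \<Longrightarrow> s permutes S \<Longrightarrow> S \<subseteq> {1..n} \<Longrightarrow> p \<circ> s \<in> Sn n"
  unfolding Sn_def using permutes_compose permutes_subset by blast

lemma bij_right: "s permutes {1..n} \<Longrightarrow> bij_betw (\<lambda>p. p \<circ> s) (Sn n) (Sn n)"
proof (rule bij_betw_byWitness[where f'="\<lambda>p. p \<circ> inv s"])
  assume s: "s permutes {1..n}"
  have si: "inv s permutes {1..n}" using permutes_inv[OF s] .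
  show "\<forall>a\<in>Sn n. a \<circ> s \<circ> inv s = a" using permutes_inv_o[OF s] by (simp add: o_assoc[symmetric])
  show "\<forall>a\<in>Sn n. a \<circ> inv s \<circ> s = a" using permutes_inv_o[OF s] by (simp add: o_assoc[symmetric])
  show "(\<lambda>p. p \<circ> s) ` Sn n \<subseteq> Sn n" using Sn_comp[OF _ s] by blast
  show "(\<lambda>p. p \<circ> inv s) ` Sn n \<subseteq> Sn n" using Sn_comp[OF _ si] by blast
qed

lemma bij_left: "s0 permutes S \<Longrightarrow> bij_betw (\<lambda>s. s0 \<circ> s) {s. s permutes S} {s. s permutes S}"
proof (rule bij_betw_byWitness[where f'="\<lambda>s. inv s0 \<circ> s"])
  assume s: "s0 permutes S"
  have si: "inv s0 permutes S" using permutes_inv[OF s] .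
  show "\<forall>a\<in>{s. s permutes S}. inv s0 \<circ> (s0 \<circ> a) = a" using permutes_inv_o[OF s] by (simp add: o_assoc)
  show "\<forall>a\<in>{s. s permutes S}. s0 \<circ> (inv s0 \<circ> a) = a" using permutes_inv_o[OF s] by (simp add: o_assoc)
  show "(\<lambda>s. s0 \<circ> s) ` {s. s permutes S} \<subseteq> {s. s permutes S}" using permutes_compose[OF _ s] by blast
  show "(\<lambda>s. inv s0 \<circ> s) ` {s. s permutes S} \<subseteq> {s. s permutes S}" using permutes_compose[OF _ si] by blast
qed


lemma key:
  assumes k: "1 \<le> k" "k < l" "l \<le> n" and v: "v \<in> Fk n k" and w: "w \<in> Uk n l"
  shows "ip n v w = 0"
proof -
  have kn: "k \<le> n" and l1: "1 \<le> l" using k by auto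
  define T where "T = {\<sigma>. \<sigma> permutes {k+1..n}}"
  have finT: "finite T" unfolding T_def by (rule finite_permutations) simp
  have idT: "id \<in> T" unfolding T_def by (simp add: permutes_id)
  have cT: "real (card T) > 0" using finT idT card_gt_0_iff by fastforce
  have vU: "v \<in> Uk n k" and vorth: "\<forall>u\<in>Utk n k. ip n v u = 0" using v unfolding Fk_def by auto
  have Tsub: "{k+1..n} \<subseteq> {1..n}" using k by auto
  have HV: "\<forall>p\<in>Sn n. \<forall>q\<in>Sn n.
     p ` {1..<k} = q ` {1..<k} \<and> p k = q k \<and> p ` {k+1..n} = q ` {k+1..n} \<longrightarrow> v p = v q"
    using vU[unfolded Uk_iff[OF k(1) kn]] by (rule conjunct2)
  have HW: "\<forall>p\<in>Sn n. \<forall>q\<in>Sn n.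
     p ` {1..<l} = q ` {1..<l} \<and> p l = q l \<and> p ` {l+1..n} = q ` {l+1..n} \<longrightarrow> w p = w q"
    using w[unfolded Uk_iff[OF l1 k(3)]] by (rule conjunct2)
  have vinv: "v (p \<circ> \<sigma>) = v p" if p: "p \<in> Sn n" and s: "\<sigma> \<in> T" for p \<sigma>
  proof -
    have sp: "\<sigma> permutes {k+1..n}" using s T_def by simp
    have ps: "p \<circ> \<sigma> \<in> Sn n" using Sn_comp[OF p sp Tsub] .
    have "(p \<circ> \<sigma>) ` {1..<k} = p ` {1..<k}" by (rule img_fix[OF sp]) auto
    moreover have "(p \<circ> \<sigma>) ` {k+1..n} = p ` {k+1..n}" by (rule img_fix[OF sp]) auto
    moreover have "(p \<circ> \<sigma>) k = p k" using permutes_not_in[OF sp, of k] by simp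
    ultimately show ?thesis by (intro HV[rule_format, OF ps p] conjI)
  qed
  have winv: "w (p \<circ> \<tau>) = w p" if p: "p \<in> Sn n" and tp: "\<tau> permutes {1..k}" for p \<tau>
  proof -
    have ps: "p \<circ> \<tau> \<in> Sn n" using Sn_comp[OF p tp] kn by auto
    have "(p \<circ> \<tau>) ` {1..<l} = p ` {1..<l}" by (rule img_fix[OF tp]) (use k in auto)
    moreover have "(p \<circ> \<tau>) ` {l+1..n} = p ` {l+1..n}" by (rule img_fix[OF tp]) (use k in auto)
    moreover have "(p \<circ> \<tau>) l = p l" using permutes_not_in[OF tp, of l] k by simp
    ultimately show ?thesis by (intro HW[rule_format, OF ps p] conjI)
  qed
  define u where "u = (\<lambda>p. if p \<in> Sn n then (\<Sum>\<sigma>\<in>T. w (p \<circ> \<sigma>)) / real (card T) else 0)"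
  have A: "(\<Sum>p\<in>Sn n. v p * w (p \<circ> \<sigma>)) = ip n v w" if s: "\<sigma> \<in> T" for \<sigma>
  proof -
    have sp: "\<sigma> permutes {1..n}" using s T_def permutes_subset[OF _ Tsub] by simp
    have "(\<Sum>p\<in>Sn n. v p * w (p \<circ> \<sigma>)) = (\<Sum>p\<in>Sn n. v (p \<circ> \<sigma>) * w (p \<circ> \<sigma>))"
      by (rule sum.cong) (simp_all add: vinv s)
    also have "\<dots> = (\<Sum>p\<in>Sn n. v p * w p)"
      using sum.reindex_bij_betw[OF bij_right[OF sp], of "\<lambda>p. v p * w p"] by simp
    finally show ?thesis unfolding ip_def .
  qed
  have B: "ip n v u = ip n v w"
  proof -
    have "ip n v u = (\<Sum>p\<in>Sn n. (\<Sum>\<sigma>\<in>T. v p * w (p \<circ> \<sigma>)) / real (card T))"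
      unfolding ip_def by (rule sum.cong) (simp_all add: u_def sum_distrib_left)
    also have "\<dots> = (\<Sum>p\<in>Sn n. \<Sum>\<sigma>\<in>T. v p * w (p \<circ> \<sigma>)) / real (card T)"
      by (simp add: sum_divide_distrib)
    also have "(\<Sum>p\<in>Sn n. \<Sum>\<sigma>\<in>T. v p * w (p \<circ> \<sigma>)) = (\<Sum>\<sigma>\<in>T. \<Sum>p\<in>Sn n. v p * w (p \<circ> \<sigma>))"
      by (rule sum.swap)
    also have "\<dots> = (\<Sum>\<sigma>\<in>T. ip n v w)" by (rule sum.cong) (simp_all add: A)
    also have "\<dots> = real (card T) * ip n v w" by simp
    finally show ?thesis using cT by simp
  qed
  have C: "u \<in> Utk n k"
    unfolding Utk_iff[OF k(1) kn]
  proof (intro conjI ballI impI)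
    show "u \<in> vecs n" unfolding vecs_def u_def by simp
    fix p q assume p: "p \<in> Sn n" and q: "q \<in> Sn n"
      and h: "p ` {1..k} = q ` {1..k} \<and> p ` {k+1..n} = q ` {k+1..n}"
    have pp: "p permutes {1..n}" and qp: "q permutes {1..n}" using p q by (auto simp: Sn_def)
    define \<rho> where "\<rho> = inv p \<circ> q"
    have rp: "\<rho> permutes {1..n}" unfolding \<rho>_def by (rule permutes_compose[OF qp permutes_inv[OF pp]])
    have qeq: "q = p \<circ> \<rho>" unfolding \<rho>_def by (simp add: o_assoc permutes_inv_o[OF pp])
    have "\<rho> ` {1..k} = inv p ` (p ` {1..k})" using h by (simp add: \<rho>_def image_comp)
    also have "\<dots> = {1..k}" by (simp add: image_comp permutes_inv_o(2)[OF pp])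
    finally have rK: "\<rho> ` {1..k} = {1..k}" .
    have "\<rho> ` {k+1..n} = \<rho> ` ({1..n} - {1..k})"
    proof -
      have "{k+1..n} = {1..n} - {1..k}" using k by auto
      then show ?thesis by simp
    qed
    also have "\<dots> = \<rho> ` {1..n} - \<rho> ` {1..k}" by (rule image_set_diff[OF permutes_inj[OF rp]])
    also have "\<dots> = {k+1..n}" using rK permutes_image[OF rp] k by auto
    finally have rK2: "\<rho> ` {k+1..n} = {k+1..n}" .
    define \<tau> where "\<tau> = (\<lambda>x. if x \<in> {1..k} then \<rho> x else x)"
    define \<sigma>0 where "\<sigma>0 = (\<lambda>x. if x \<in> {k+1..n} then \<rho> x else x)"
    have tp: "\<tau> permutes {1..k}"
    proof (rule bij_imp_permutes)
      have "bij_betw \<rho> {1..k} {1..k}" using rK permutes_inj_on[OF rp] by (simp add: bij_betw_def)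
      then show "bij_betw \<tau> {1..k} {1..k}" by (rule bij_betw_cong[THEN iffD1, rotated]) (simp add: \<tau>_def)
    qed (auto simp: \<tau>_def)
    have sp: "\<sigma>0 permutes {k+1..n}"
    proof (rule bij_imp_permutes)
      have "bij_betw \<rho> {k+1..n} {k+1..n}" using rK2 permutes_inj_on[OF rp] by (simp add: bij_betw_def)
      then show "bij_betw \<sigma>0 {k+1..n} {k+1..n}" by (rule bij_betw_cong[THEN iffD1, rotated]) (simp add: \<sigma>0_def)
    qed (auto simp: \<sigma>0_def)
    have rdec: "\<rho> = \<tau> \<circ> \<sigma>0"
    proof
      fix x
      show "\<rho> x = (\<tau> \<circ> \<sigma>0) x"
      proof (cases "x \<in> {k+1..n}")
        case True
        then have "\<rho> x \<in> {k+1..n}" using rK2 by blast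
        then show ?thesis using True k by (auto simp: \<tau>_def \<sigma>0_def)
      next
        case False
        show ?thesis
        proof (cases "x \<in> {1..k}")
          case True then show ?thesis using False by (simp add: \<tau>_def \<sigma>0_def)
        next
          case F2: False
          then have "x \<notin> {1..n}" using False by auto
          then have "\<rho> x = x" using permutes_not_in[OF rp] by simp
          then show ?thesis using False F2 by (simp add: \<tau>_def \<sigma>0_def)
        qed
      qed
    qed
    have pt: "p \<circ> \<tau> \<in> Sn n" using Sn_comp[OF p tp] kn by auto
    have "(\<Sum>\<sigma>\<in>T. w (q \<circ> \<sigma>)) = (\<Sum>\<sigma>\<in>T. w ((p \<circ> \<tau>) \<circ> (\<sigma>0 \<circ> \<sigma>)))"
      by (simp add: qeq rdec o_assoc)
    also have "\<dots> = (\<Sum>\<sigma>\<in>T. w ((p \<circ> \<tau>) \<circ> \<sigma>))"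
      using sum.reindex_bij_betw[OF bij_left[OF sp], of "\<lambda>\<sigma>. w ((p \<circ> \<tau>) \<circ> \<sigma>)"] by (simp add: T_def)
    also have "\<dots> = (\<Sum>\<sigma>\<in>T. w (p \<circ> \<sigma>))"
    proof (rule sum.cong[OF refl])
      fix \<sigma> assume s: "\<sigma> \<in> T"
      have s': "\<sigma> permutes {k+1..n}" using s T_def by simp
      have "\<tau> \<circ> \<sigma> = \<sigma> \<circ> \<tau>" by (rule perm_commute[OF tp s']) auto
      then have "(p \<circ> \<tau>) \<circ> \<sigma> = (p \<circ> \<sigma>) \<circ> \<tau>" by (simp add: o_assoc[symmetric])
      moreover have "p \<circ> \<sigma> \<in> Sn n" using Sn_comp[OF p s' Tsub] .
      ultimately show "w ((p \<circ> \<tau>) \<circ> \<sigma>) = w (p \<circ> \<sigma>)" using winv[OF _ tp] by simp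
    qed
    finally show "u p = u q" using p q by (simp add: u_def)
  qed
  have "ip n v u = 0" using vorth C by blast
  then show ?thesis using B by simp
qed


lemma ip_comm: "ip n v w = ip n w v"
  unfolding ip_def by (simp add: mult.commute)

theorem lemma5:
  fixes n :: nat
  shows "(\<forall>k l v w. 2 \<le> k \<and> k \<le> n \<and> 2 \<le> l \<and> l \<le> n \<and> k \<noteq> l \<and>
            v \<in> Fk n k \<and> w \<in> Fk n l \<longrightarrow> ip n v w = 0)
       \<and> (\<forall>k v. 2 \<le> k \<and> k \<le> n \<and> v \<in> Fk n k \<longrightarrow> ip n v (ones n) = 0)"
proof (intro conjI allI impI)
  fix k l v w
  assume h: "2 \<le> k \<and> k \<le> n \<and> 2 \<le> l \<and> l \<le> n \<and> k \<noteq> l \<and> v \<in> Fk n k \<and> w \<in> Fk n l"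
  show "ip n v w = 0"
  proof (cases "k < l")
    case True
    have "w \<in> Uk n l" using h by (simp add: Fk_def)
    then show ?thesis using key[of k l n v w] h True by simp
  next
    case False
    then have "l < k" using h by simp
    moreover have "v \<in> Uk n k" using h by (simp add: Fk_def)
    ultimately have "ip n w v = 0" using key[of l k n w v] h by simp
    then show ?thesis by (simp add: ip_comm)
  qed
next
  fix k v
  assume h: "2 \<le> k \<and> k \<le> n \<and> v \<in> Fk n k"
  have "ones n \<in> Utk n k" unfolding Utk_def U_def vecs_def ones_def by simp
  then show "ip n v (ones n) = 0" using h by (simp add: Fk_def)
qed

end
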